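(* Let $k\ge 3$, let $\nu:(\mathbb{P}^1)^k\to\mathbb{P}^{2^k-1}$ be the Segre embedding, and let $\Gamma\subset(\mathbb{P}^1)^k$ be a connected curvilinear zero-dimensional scheme of degree $3$ with $\deg(\pi_i(\Gamma))=3$ for all $i$; let $o$ be the support point of $\Gamma$. Then for every divisor $F\in|\mathcal{O}_{(\mathbb{P}^1)^k}(\epsilon_k)|$ (i.e. $F=\pi_k^{-1}(t)$ for a point $t\in\mathbb{P}^1$) with $o\notin F$, we have $\langle\nu(\Gamma)\rangle\cap\langle\nu(F)\rangle=\emptyset$.
   Context: Work over an algebraically closed field. $\pi_i:(\mathbb{P}^1)^k\to\mathbb{P}^1$ is the $i$-th projection; $\epsilon_k=(0,\dots,0,1)\in\mathbb{N}^k$, so $\mathcal{O}(\epsilon_k)=\pi_k^*\mathcal{O}_{\mathbb{P}^1}(1)$. A zero-dimensional scheme is curvilinear if each connected component has Zariski tangent space of dimension $\le1$. $\langle Y\rangle$ denotes the linear span. *)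

theory Defs
  imports "HOL-Computational_Algebra.Polynomial"
begin

definition alg_closed :: "'a::field itself \<Rightarrow> bool" where
  "alg_closed _ \<longleftrightarrow> (\<forall>p::'a poly. degree p > 0 \<longrightarrow> (\<exists>x. poly p x = 0))"

text \<open>Points of P^1 are given by nonzero homogeneous coordinate pairs.
  The ambient space of the Segre embedding of (P^1)^k is P(K^(2^k)); coordinates are
  indexed by subsets S of {0..<k} (S = set of factors where the second coordinate is taken).
  Vectors are functions nat set => K, zero outside Pow {..<k}.\<close>
definition segre :: "nat \<Rightarrow> (nat \<Rightarrow> 'a \<times> 'a) \<Rightarrow> nat set \<Rightarrow> 'a::comm_ring_1" where
  "segre k q = (\<lambda>S. if S \<subseteq> {..<k}
      then (\<Prod>i<k. if i \<in> S then snd (q i) else fst (q i)) else 0)"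

definition lspan :: "('b \<Rightarrow> 'a::field) set \<Rightarrow> ('b \<Rightarrow> 'a) set" where
  "lspan X = {v. \<exists>Y c. finite Y \<and> Y \<subseteq> X \<and> v = (\<lambda>S. \<Sum>y\<in>Y. c y * y S)}"

text \<open>A connected curvilinear degree-3 scheme is the image of a closed embedding
  Spec K[t]/(t^3) -> (P^1)^k.  Such a morphism is given by a k-tuple of pairs of
  polynomials p i = (a_i(t), b_i(t)) (homogeneous coordinates of the i-th component,
  only taken modulo t^3) with (a_i(0), b_i(0)) \<noteq> (0,0).\<close>
definition jet_ok :: "nat \<Rightarrow> (nat \<Rightarrow> 'a::field poly \<times> 'a poly) \<Rightarrow> bool" where
  "jet_ok k p \<longleftrightarrow> (\<forall>i<k. (poly (fst (p i)) 0, poly (snd (p i)) 0) \<noteq> (0, 0))"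

definition jet_pt :: "(nat \<Rightarrow> 'a::field poly \<times> 'a poly) \<Rightarrow> nat \<Rightarrow> 'a \<times> 'a" where
  "jet_pt p i = (poly (fst (p i)) 0, poly (snd (p i)) 0)"

text \<open>Wronskian-type determinant of the i-th component at t = 0; it is nonzero iff the
  composite Spec K[t]/(t^3) -> P^1 (via pi_i) is a closed embedding, i.e. iff the
  scheme-theoretic image pi_i(Gamma) has degree 3.\<close>
definition jet_det :: "(nat \<Rightarrow> 'a::field poly \<times> 'a poly) \<Rightarrow> nat \<Rightarrow> 'a" where
  "jet_det p i = poly (fst (p i)) 0 * poly (pderiv (snd (p i))) 0
              - poly (snd (p i)) 0 * poly (pderiv (fst (p i))) 0"

text \<open>Gamma = image of the jet is a (curvilinear, connected) degree 3 subscheme: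
  the jet is a closed embedding (some component has nonzero derivative).\<close>
definition curvilinear_deg3_jet :: "nat \<Rightarrow> (nat \<Rightarrow> 'a::field poly \<times> 'a poly) \<Rightarrow> bool" where
  "curvilinear_deg3_jet k p \<longleftrightarrow> jet_ok k p \<and> (\<exists>i<k. jet_det p i \<noteq> 0)"

definition proj_deg3 :: "(nat \<Rightarrow> 'a::field poly \<times> 'a poly) \<Rightarrow> nat \<Rightarrow> bool" where
  "proj_deg3 p i \<longleftrightarrow> jet_det p i \<noteq> 0"

definition segre_jet :: "nat \<Rightarrow> (nat \<Rightarrow> 'a::field poly \<times> 'a poly) \<Rightarrow> nat set \<Rightarrow> 'a poly" where
  "segre_jet k p = (\<lambda>S. if S \<subseteq> {..<k}
      then (\<Prod>i<k. if i \<in> S then snd (p i) else fst (p i)) else 0)"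

text \<open>Linear span <nu(Gamma)> (as a vector subspace of K^(2^k)): a linear form vanishes on
  nu(Gamma) iff it kills the coefficients of t^0, t^1, t^2 of the Segre jet.\<close>
definition span_nu_Gamma :: "nat \<Rightarrow> (nat \<Rightarrow> 'a::field poly \<times> 'a poly) \<Rightarrow> (nat set \<Rightarrow> 'a) set" where
  "span_nu_Gamma k p = lspan {(\<lambda>S. coeff (segre_jet k p S) m) | m. m < 3}"

text \<open>Linear span <nu(F)> for F = pi_k^{-1}(t), t a point of P^1 (the last factor is k-1
  with 0-based indexing).\<close>
definition span_nu_fiber :: "nat \<Rightarrow> 'a::field \<times> 'a \<Rightarrow> (nat set \<Rightarrow> 'a) set" where
  "span_nu_fiber k t = lspan {segre k q | q. (\<forall>i<k. q i \<noteq> (0, 0)) \<and> q (k - 1) = t}"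

text \<open>o \<notin> F: the last coordinate of o differs from t in P^1.\<close>
definition not_in_fiber :: "'a::field \<times> 'a \<Rightarrow> 'a \<times> 'a \<Rightarrow> bool" where
  "not_in_fiber o' t \<longleftrightarrow> fst o' * snd t - snd o' * fst t \<noteq> 0"

end

theory Submission
  imports Defs
begin

lemma core_alg:
  fixes x y :: "'a::field"
  shows "x \<noteq> 0 \<Longrightarrow> y \<noteq> 0 \<Longrightarrow>
 n0*(a0*c0) + n1*(a0*c1+a1*c0) + n2*(a0*c2+a1*c1+a2*c0) = 0 \<Longrightarrow>
 n0*(a0*d0) + n1*(a0*d1+a1*d0) + n2*(a0*d2+a1*d1+a2*d0) = 0 \<Longrightarrow>
 n0*(b0*c0) + n1*(b0*c1+b1*c0) + n2*(b0*c2+b1*c1+b2*c0) = 0 \<Longrightarrow>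
 n0*(b0*d0) + n1*(b0*d1+b1*d0) + n2*(b0*d2+b1*d1+b2*d0) = 0 \<Longrightarrow>
 x = a0*b1 - b0*a1 \<Longrightarrow> y = c0*d1 - d0*c1 \<Longrightarrow> n2 = 0 \<and> n1 = 0 \<and> n0 = 0"
  by algebra

lemma coeff_mult_012:
  fixes p q :: "'a::comm_semiring_1 poly"
  shows "coeff (p*q) 0 = coeff p 0 * coeff q 0"
    "coeff (p*q) 1 = coeff p 0 * coeff q 1 + coeff p 1 * coeff q 0"
    "coeff (p*q) 2 = coeff p 0 * coeff q 2 + coeff p 1 * coeff q 1 + coeff p 2 * coeff q 0"
  by (simp_all add: coeff_mult numeral_2_eq_2 atMost_Suc algebra_simps)

definition Lf :: "'a \<Rightarrow> 'a \<Rightarrow> 'a \<Rightarrow> 'a poly \<Rightarrow> 'a::comm_ring_1" where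
  "Lf l0 l1 l2 f = l0 * coeff f 0 + l1 * coeff f 1 + l2 * coeff f 2"

lemma Lf_mult:
  fixes f q :: "'a::comm_ring_1 poly"
  shows "Lf l0 l1 l2 (f * q) = Lf (l0 * coeff q 0 + l1 * coeff q 1 + l2 * coeff q 2)
     (l1 * coeff q 0 + l2 * coeff q 1) (l2 * coeff q 0) f"
  unfolding Lf_def coeff_mult_012 by (simp add: algebra_simps)

lemma Lf_lin:
  "Lf l0 l1 l2 (smult a f - smult b g) = a * Lf l0 l1 l2 f - b * Lf l0 l1 l2 g"
  unfolding Lf_def by (simp add: algebra_simps)

lemma core:
  fixes a0 b0 a1 b1 :: "'a::field poly"
  assumes "coeff a0 0 * coeff b0 1 - coeff b0 0 * coeff a0 1 \<noteq> 0"
    and "coeff a1 0 * coeff b1 1 - coeff b1 0 * coeff a1 1 \<noteq> 0"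
    and "Lf n0 n1 n2 (a0*a1) = 0" "Lf n0 n1 n2 (a0*b1) = 0"
    and "Lf n0 n1 n2 (b0*a1) = 0" "Lf n0 n1 n2 (b0*b1) = 0"
  shows "n2 = 0 \<and> n1 = 0 \<and> n0 = 0"
  using assms unfolding Lf_def coeff_mult_012
  by (intro core_alg[OF assms(1,2)]) simp_all

lemma span_gamma_form:
  fixes F :: "'b \<Rightarrow> 'a::field poly"
  assumes "finite Y" "Y \<subseteq> {(\<lambda>S. coeff (F S) m) | m. m < 3}"
  shows "\<exists>l0 l1 l2. \<forall>S. (\<Sum>y\<in>Y. c y * y S) = Lf l0 l1 l2 (F S)"
  using assms
proof (induction Y rule: finite_induct)
  case empty show ?case by (rule exI[of _ 0])+ (simp add: Lf_def)
next
  case (insert y Y)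
  then obtain l0 l1 l2 where IH: "\<forall>S. (\<Sum>y\<in>Y. c y * y S) = Lf l0 l1 l2 (F S)" by auto
  from insert obtain m where m: "m<3" "y = (\<lambda>S. coeff (F S) m)" by auto
  have "m = 0 \<or> m = 1 \<or> m = 2" using m by auto
  then show ?case
  proof (elim disjE)
    assume "m=0" then show ?thesis using IH insert m
      by (intro exI[of _ "l0 + c y"] exI[of _ l1] exI[of _ l2]) (simp add: Lf_def algebra_simps)
  next
    assume "m=1" then show ?thesis using IH insert m
      by (intro exI[of _ "l0"] exI[of _ "l1 + c y"] exI[of _ l2]) (simp add: Lf_def algebra_simps)
  next
    assume "m=2" then show ?thesis using IH insert m
      by (intro exI[of _ "l0"] exI[of _ l1] exI[of _ "l2 + c y"]) (simp add: Lf_def algebra_simps)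
  qed
qed

lemma segre_split:
  fixes q :: "nat \<Rightarrow> 'a::comm_ring_1 \<times> 'a"
  assumes "k \<ge> 1" "S \<subseteq> {..<k-1}"
  shows "segre k q S = (\<Prod>i<k-1. if i \<in> S then snd (q i) else fst (q i)) * fst (q (k-1))"
    and "segre k q (insert (k-1) S) = (\<Prod>i<k-1. if i \<in> S then snd (q i) else fst (q i)) * snd (q (k-1))"
proof -
  have K: "{..<k} = insert (k-1) {..<k-1}" using assms(1) by auto
  have S1: "S \<subseteq> {..<k}" "insert (k-1) S \<subseteq> {..<k}" using assms by auto
  have ns: "k-1 \<notin> S" using assms by auto
  have c: "(\<Prod>i<k-1. if i \<in> insert (k-1) S then snd (q i) else fst (q i))
     = (\<Prod>i<k-1. if i \<in> S then snd (q i) else fst (q i))" by (rule prod.cong) auto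
  show "segre k q S = (\<Prod>i<k-1. if i \<in> S then snd (q i) else fst (q i)) * fst (q (k-1))"
    unfolding segre_def using S1 ns by (simp add: K mult.commute)
  show "segre k q (insert (k-1) S) = (\<Prod>i<k-1. if i \<in> S then snd (q i) else fst (q i)) * snd (q (k-1))"
    unfolding segre_def using S1 by (simp add: K c mult.commute)
qed

lemma fiber_rel:
  fixes t0 t1 :: "'a::field"
  assumes "v \<in> span_nu_fiber k (t0,t1)" "k \<ge> 1" "S \<subseteq> {..<k-1}"
  shows "t1 * v S - t0 * v (insert (k-1) S) = 0"
proof -
  obtain Y c where Y: "finite Y" "Y \<subseteq> {segre k q | q. (\<forall>i<k. q i \<noteq> (0,0)) \<and> q (k-1) = (t0,t1)}"
      "v = (\<lambda>S. \<Sum>y\<in>Y. c y * y S)"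
    using assms(1) unfolding span_nu_fiber_def lspan_def by blast
  have "\<forall>y\<in>Y. t1 * y S - t0 * y (insert (k-1) S) = 0"
  proof
    fix y assume "y\<in>Y"
    then obtain q where "y = segre k q" "q (k-1) = (t0,t1)" using Y by blast
    then show "t1 * y S - t0 * y (insert (k-1) S) = 0"
      using segre_split[OF assms(2,3), of q] by (simp add: algebra_simps)
  qed
  then have "(\<Sum>y\<in>Y. c y * (t1 * y S - t0 * y (insert (k-1) S))) = 0" by simp
  then show ?thesis using Y(3)
    by (simp add: sum_distrib_left sum_subtractf algebra_simps)
qed

lemma zero_lspan: "(\<lambda>S. 0) \<in> lspan X"
  unfolding lspan_def by (rule CollectI, rule exI[of _ "{}"]) auto

lemma split2:
  fixes A B :: "nat \<Rightarrow> 'a::comm_ring_1"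
  assumes "n \<ge> 2"
  shows "(\<Prod>i<n. if i \<in> S then B i else A i) = (if 0 \<in> S then B 0 else A 0) *
     ((if 1 \<in> S then B 1 else A 1) * (\<Prod>i\<in>{2..<n}. if i \<in> S then B i else A i))"
proof -
  have "{..<n} = insert 0 (insert 1 {2..<n})" using assms by auto
  then show ?thesis by simp
qed

theorem claim1:
  fixes k :: nat and p :: "nat \<Rightarrow> 'a::field poly \<times> 'a poly" and t :: "'a \<times> 'a"
  assumes "alg_closed TYPE('a)"
    and "k \<ge> 3"
    and "curvilinear_deg3_jet k p"
    and "\<forall>i<k. proj_deg3 p i"
    and "t \<noteq> (0, 0)"
    and "not_in_fiber (jet_pt p (k - 1)) t"
  shows "span_nu_Gamma k p \<inter> span_nu_fiber k t = {(\<lambda>S. 0)}"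
proof
  obtain t0 t1 where t: "t = (t0, t1)" by (cases t)
  define A where "A i = fst (p i)" for i
  define B where "B i = snd (p i)" for i
  define J' where "J' S = (\<Prod>i<k-1. if i \<in> S then B i else A i)" for S
  define g where "g = smult t1 (A (k-1)) - smult t0 (B (k-1))"
  have g0: "coeff g 0 \<noteq> 0" using assms(6)
    by (simp add: g_def t not_in_fiber_def jet_pt_def A_def B_def poly_0_coeff_0 algebra_simps)
  have ok: "\<forall>i<k. (coeff (A i) 0, coeff (B i) 0) \<noteq> (0,0)"
    using assms(3) by (simp add: curvilinear_deg3_jet_def jet_ok_def A_def B_def poly_0_coeff_0)
  have det: "coeff (A i) 0 * coeff (B i) 1 - coeff (B i) 0 * coeff (A i) 1 \<noteq> 0" if "i < k" for i
    using assms(4) that by (simp add: proj_deg3_def jet_det_def A_def B_def poly_0_coeff_0 coeff_pderiv)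
  show "span_nu_Gamma k p \<inter> span_nu_fiber k t \<subseteq> {\<lambda>S. 0}"
  proof
    fix u assume u: "u \<in> span_nu_Gamma k p \<inter> span_nu_fiber k t"
    obtain Y c where Y: "finite Y" "Y \<subseteq> {(\<lambda>S. coeff (segre_jet k p S) m) | m. m < 3}"
        "u = (\<lambda>S. \<Sum>y\<in>Y. c y * y S)"
      using u unfolding span_nu_Gamma_def lspan_def by blast
    obtain l0 l1 l2 where L: "\<forall>S. u S = Lf l0 l1 l2 (segre_jet k p S)"
      using span_gamma_form[OF Y(1,2), of c] Y(3) by auto
    have sj: "segre_jet k p = segre k p" unfolding segre_jet_def segre_def by simp
    have rel: "Lf l0 l1 l2 (J' S * g) = 0" if "S \<subseteq> {..<k-1}" for S
    proof -
      have "t1 * u S - t0 * u (insert (k-1) S) = 0"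
        using fiber_rel[of u k t0 t1 S] u t that assms(2) by auto
      moreover have "J' S * g = smult t1 (J' S * A (k-1)) - smult t0 (J' S * B (k-1))"
        by (simp add: g_def algebra_simps)
      moreover have "u S = Lf l0 l1 l2 (J' S * A (k-1))" "u (insert (k-1) S) = Lf l0 l1 l2 (J' S * B (k-1))"
        using L segre_split[of k S p] that assms(2) unfolding sj J'_def A_def B_def by auto
      ultimately show ?thesis by (simp add: Lf_lin)
    qed
    define R where "R = {i. coeff (A i) 0 = 0}"
    define h where "h = (\<Prod>i\<in>{2..<k-1}. if i \<in> R then B i else A i)"
    have h0: "coeff h 0 \<noteq> 0"
    proof -
      have nz: "\<forall>i\<in>{2..<k-1}. poly (if i \<in> R then B i else A i) 0 \<noteq> 0"
      proof
        fix i assume "i \<in> {2..<k-1}"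
        then have "i < k" by auto
        then show "poly (if i \<in> R then B i else A i) 0 \<noteq> 0"
          using ok by (auto simp: R_def poly_0_coeff_0)
      qed
      have "coeff h 0 = poly h 0" by (simp add: poly_0_coeff_0)
      also have "\<dots> = (\<Prod>i\<in>{2..<k-1}. poly (if i \<in> R then B i else A i) 0)"
        unfolding h_def by (simp only: poly_prod)
      also have "\<dots> \<noteq> 0" using nz by simp
      finally show ?thesis .
    qed
    define q where "q = h * g"
    have "coeff q 0 = coeff h 0 * coeff g 0" unfolding q_def by (rule coeff_mult_012(1))
    then have q0: "coeff q 0 \<noteq> 0" using h0 g0 by simp
    have hR: "(\<Prod>i\<in>{2..<k-1}. if i \<in> S then B i else A i) = h" if "S \<inter> {2..<k-1} = R \<inter> {2..<k-1}" for S
    proof -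
      have "(if i \<in> S then B i else A i) = (if i \<in> R then B i else A i)" if "i \<in> {2..<k-1}" for i
      proof -
        have "(i \<in> S) = (i \<in> R)" using that \<open>S \<inter> {2..<k-1} = R \<inter> {2..<k-1}\<close> by blast
        then show ?thesis by simp
      qed
      then show ?thesis unfolding h_def by (rule prod.cong[OF refl])
    qed
    have sub: "S \<union> (R \<inter> {2..<k-1}) \<subseteq> {..<k-1}" if "S \<subseteq> {0,1}" for S :: "nat set" using that assms(2) by auto
    have J'e: "J' (S \<union> (R \<inter> {2..<k-1})) = (if 0 \<in> S then B 0 else A 0) * (if 1 \<in> S then B 1 else A 1) * h"
      if "S \<subseteq> {0,1}" for S :: "nat set"
    proof -
      define S' where "S' = S \<union> (R \<inter> {2..<k-1})"
      have i1: "S' \<inter> {2..<k-1} = R \<inter> {2..<k-1}" using that unfolding S'_def by auto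
      have i2: "(0 \<in> S') = (0 \<in> S)" "(1 \<in> S') = (1 \<in> S)" unfolding S'_def by auto
      have "J' S' = (if 0 \<in> S' then B 0 else A 0) *
     ((if 1 \<in> S' then B 1 else A 1) * (\<Prod>i\<in>{2..<k-1}. if i \<in> S' then B i else A i))"
        unfolding J'_def by (rule split2) (use assms(2) in linarith)
      then show ?thesis unfolding S'_def[symmetric] i2 hR[OF i1] by (simp only: mult.assoc)
    qed
    let ?n0 = "l0 * coeff q 0 + l1 * coeff q 1 + l2 * coeff q 2"
    let ?n1 = "l1 * coeff q 0 + l2 * coeff q 1"
    let ?n2 = "l2 * coeff q 0"
    have E: "Lf ?n0 ?n1 ?n2 (x * y) = 0" if "S \<subseteq> {0,1}"
      "x = (if 0 \<in> S then B 0 else A 0)" "y = (if 1 \<in> S then B 1 else A 1)" for S :: "nat set" and x y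
    proof -
      have "Lf l0 l1 l2 (J' (S \<union> (R \<inter> {2..<k-1})) * g) = 0" using rel sub that(1) by blast
      then have "Lf l0 l1 l2 ((x*y) * q) = 0" using J'e[OF that(1)] that by (simp add: q_def mult.assoc)
      then show ?thesis by (simp add: Lf_mult)
    qed
    have "?n2 = 0 \<and> ?n1 = 0 \<and> ?n0 = 0"
      proof -
      have k01: "0 < k" "1 < k" using assms(2) by auto
      have e1: "Lf ?n0 ?n1 ?n2 (A 0 * A 1) = 0" using E[of "{}" "A 0" "A 1"] by simp
      have e2: "Lf ?n0 ?n1 ?n2 (A 0 * B 1) = 0" using E[of "{1}" "A 0" "B 1"] by simp
      have e3: "Lf ?n0 ?n1 ?n2 (B 0 * A 1) = 0" using E[of "{0}" "B 0" "A 1"] by simp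
      have e4: "Lf ?n0 ?n1 ?n2 (B 0 * B 1) = 0" using E[of "{0,1}" "B 0" "B 1"] by simp
      show ?thesis by (rule core[OF det[OF k01(1)] det[OF k01(2)] e1 e2 e3 e4])
    qed
    then have n: "l2 * coeff q 0 = 0" "l1 * coeff q 0 + l2 * coeff q 1 = 0"
      "l0 * coeff q 0 + l1 * coeff q 1 + l2 * coeff q 2 = 0" by auto
    have l2: "l2 = 0" using n(1) q0 by simp
    have l1: "l1 = 0" using n(2) q0 l2 by simp
    have l0: "l0 = 0" using n(3) q0 l2 l1 by simp
    have "u = (\<lambda>S. 0)"
    proof
      fix S show "u S = 0" using L l0 l1 l2 by (simp add: Lf_def)
    qed
    then show "u \<in> {\<lambda>S. 0}" by simp
  qed
next
  show "{\<lambda>S. 0} \<subseteq> span_nu_Gamma k p \<inter> span_nu_fiber k t"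
    by (simp add: span_nu_Gamma_def span_nu_fiber_def zero_lspan)
qed

end
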